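(* For all $n,k\in\mathbb Z$, \[ \binom{n}{k}_w=\binom{n}{n-k}_{\widehat w}\prod_{j=1}^{k}W(j,n-k), \] where $\widehat w(s,t)=w(t,s)^{-1}$.
   Context: $(w(s,t))_{s,t\in\mathbb Z}$ are commuting invertible variables. Product convention: $\prod_{j=l}^m A_j=A_l\cdots A_m$ if $m>l-1$, $=1$ if $m=l-1$, $=A_{l-1}^{-1}\cdots A_{m+1}^{-1}$ if $m<l-1$. For any such weight family $v$, set $W_v(s,t)=\prod_{j=1}^t v(s,j)$ (and $W=W_w$), and let $\binom{n}{k}_v$ ($n,k\in\mathbb Z$) be the unique family with $\binom{n}{0}_v=\binom{n}{n}_v=1$ for all $n\in\mathbb Z$ and $\binom{n+1}{k}_v=\binom{n}{k}_v+\binom{n}{k-1}_v W_v(k,n+1-k)$ for all $n,k$ with $(n+1,k)\ne(0,0)$. *)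

theory Defs
  imports Main
begin

definition prodz :: "(int \<Rightarrow> 'a::field) \<Rightarrow> int \<Rightarrow> int \<Rightarrow> 'a" where
  "prodz A l m =
     (if m > l - 1 then (\<Prod>j\<in>{l..m}. A j)
      else if m = l - 1 then 1
      else (\<Prod>j\<in>{m+1..l-1}. inverse (A j)))"

definition Wt :: "(int \<Rightarrow> int \<Rightarrow> 'a::field) \<Rightarrow> int \<Rightarrow> int \<Rightarrow> 'a" where
  "Wt v s t = prodz (\<lambda>j. v s j) 1 t"

definition is_wbinom_family :: "(int \<Rightarrow> int \<Rightarrow> 'a::field) \<Rightarrow> (int \<Rightarrow> int \<Rightarrow> 'a) \<Rightarrow> bool" where
  "is_wbinom_family v B \<longleftrightarrow>
     (\<forall>n. B n 0 = 1 \<and> B n n = 1) \<and>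
     (\<forall>n k. (n + 1, k) \<noteq> (0, 0) \<longrightarrow>
        B (n + 1) k = B n k + B n (k - 1) * Wt v k (n + 1 - k))"

definition wbinom :: "(int \<Rightarrow> int \<Rightarrow> 'a::field) \<Rightarrow> int \<Rightarrow> int \<Rightarrow> 'a" where
  "wbinom v = (THE B. is_wbinom_family v B)"

end

theory Submission
  imports Defs
begin

lemma prodz_alt: "prodz A l m = (\<Prod>j\<in>{l..m}. A j) / (\<Prod>j\<in>{m+1..l-1}. A j)"
proof -
  have inv: "(\<Prod>j\<in>S. inverse (A j)) = inverse (\<Prod>j\<in>S. A j)" for S
    using prod_inversef[of A S] by (simp add: comp_def)
  show ?thesis unfolding prodz_def
    by (auto simp: inv divide_inverse)
qed

lemma prodz_mult: "prodz (\<lambda>j. A j * B j) l m = prodz A l m * prodz B l m"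
  unfolding prodz_alt by (simp add: prod.distrib)

lemma prodz_inverse: "prodz (\<lambda>j. inverse (A j)) l m = inverse (prodz A l m)"
  unfolding prodz_alt using prod_inversef[of A]
  by (simp add: comp_def prod_inversef[of A, unfolded comp_def] divide_inverse mult.commute)

lemma prodz_one: "prodz (\<lambda>j. 1) l m = 1"
  unfolding prodz_alt by simp

lemma prodz_nz: "(\<And>j. A j \<noteq> 0) \<Longrightarrow> prodz A l m \<noteq> 0"
  unfolding prodz_alt by (simp add: prod_zero_iff)

lemma prodz_empty: "prodz A l (l - 1) = 1"
  unfolding prodz_def by simp

lemma prodz_step:
  assumes "A m \<noteq> 0"
  shows "prodz A l m = prodz A l (m - 1) * A m"
proof (cases "m \<ge> l")
  case True
  have "{l..m} = insert m {l..m-1}" using True by auto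
  then show ?thesis using True unfolding prodz_alt by simp
next
  case False
  have "{m..l-1} = insert m {m+1..l-1}" using False by auto
  then show ?thesis using False assms unfolding prodz_alt by (simp add: field_simps)
qed

lemma Wt_zero[simp]: "Wt v s 0 = 1"
  unfolding Wt_def prodz_def by simp

lemma Wt_nz: "(\<And>s t. v s t \<noteq> 0) \<Longrightarrow> Wt v s t \<noteq> 0"
  unfolding Wt_def by (rule prodz_nz) auto

lemma Wt_step: "(\<And>s t. v s t \<noteq> 0) \<Longrightarrow> Wt v s (t + 1) = Wt v s t * v s (t + 1)"
  unfolding Wt_def using prodz_step[of "\<lambda>j. v s j" "t+1" 1] by simp

lemma uniqE:
  fixes D :: "int \<Rightarrow> int \<Rightarrow> 'a::field"
  assumes ax1: "\<And>j. D 0 j = 0" and ax2: "\<And>k. D k 0 = 0"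
    and tr: "\<And>k j. (k, j) \<noteq> (0, -1) \<Longrightarrow> D k (j + 1) = D k j + D (k - 1) (j + 1) * c k j"
    and cnz: "\<And>k j. c k j \<noteq> 0"
  shows "D k j = 0"
proof -
  have low: "\<forall>k. D k (- int m) = 0" for m
  proof (induction m)
    case 0 then show ?case using ax2 by simp
  next
    case (Suc m)
    show ?case
    proof
      fix k
      show "D k (- int (Suc m)) = 0"
      proof (cases "k = 0")
        case True then show ?thesis using ax1 by simp
      next
        case False
        have "D k (- int (Suc m) + 1) = D k (- int (Suc m)) + D (k - 1) (- int (Suc m) + 1) * c k (- int (Suc m))"
          by (rule tr) (use False in simp)
        moreover have "- int (Suc m) + 1 = - int m" by simp
        ultimately show ?thesis using Suc by simp
      qed
    qed
  qed
  have up: "\<forall>k. D k (int b) = 0" for b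
  proof (induction b)
    case 0 then show ?case using ax2 by simp
  next
    case (Suc b)
    have p: "D (int a) (int b + 1) = 0" for a
    proof (induction a)
      case 0 then show ?case using ax1 by simp
    next
      case (Suc a)
      have "D (int (Suc a)) (int b + 1) = D (int (Suc a)) (int b) + D (int (Suc a) - 1) (int b + 1) * c (int (Suc a)) (int b)"
        by (rule tr) simp
      then show ?case using Suc \<open>\<forall>k. D k (int b) = 0\<close> by simp
    qed
    have n: "D (- int a) (int b + 1) = 0" for a
    proof (induction a)
      case 0 then show ?case using ax1 by simp
    next
      case (Suc a)
      have "D (- int a) (int b + 1) = D (- int a) (int b) + D (- int a - 1) (int b + 1) * c (- int a) (int b)"
        by (rule tr) simp
      then have "D (- int a - 1) (int b + 1) * c (- int a) (int b) = 0"
        using Suc \<open>\<forall>k. D k (int b) = 0\<close> by simp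
      then have "D (- int a - 1) (int b + 1) = 0" using cnz by simp
      moreover have "- int (Suc a) = - int a - 1" by simp
      ultimately show ?case by metis
    qed
    show ?case
    proof
      fix k :: int
      show "D k (int (Suc b)) = 0"
      proof (cases "k \<ge> 0")
        case True then show ?thesis using p[of "nat k"] by (simp add: add.commute)
      next
        case False then show ?thesis using n[of "nat (-k)"] by (simp add: add.commute)
      qed
    qed
  qed
  show ?thesis
  proof (cases "j \<ge> 0")
    case True then show ?thesis using up[of "nat j"] by simp
  next
    case False then show ?thesis using low[of "nat (-j)"] by simp
  qed
qed

lemma family_unique:
  assumes nz: "\<And>s t. v s t \<noteq> 0" and f1: "is_wbinom_family v B1" and f2: "is_wbinom_family v B2"
  shows "B1 = B2"
proof -
  define D where "D k j = B1 (k + j) k - B2 (k + j) k" for k j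
  have "D k j = 0" for k j
  proof (rule uniqE[where c = "\<lambda>k j. Wt v k (j + 1)"])
    show "D 0 j = 0" for j using f1 f2 unfolding D_def is_wbinom_family_def by simp
    show "D k 0 = 0" for k using f1 f2 unfolding D_def is_wbinom_family_def by simp
    show "Wt v k (j + 1) \<noteq> 0" for k j using Wt_nz nz by blast
    show "D k (j + 1) = D k j + D (k - 1) (j + 1) * Wt v k (j + 1)" if "(k, j) \<noteq> (0, -1)" for k j
    proof -
      have ne: "(k + j + 1, k) \<noteq> (0, 0)" using that by auto
      have e1: "B1 (k + j + 1) k = B1 (k + j) k + B1 (k + j) (k - 1) * Wt v k (k + j + 1 - k)"
        using f1 ne unfolding is_wbinom_family_def by blast
      have e2: "B2 (k + j + 1) k = B2 (k + j) k + B2 (k + j) (k - 1) * Wt v k (k + j + 1 - k)"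
        using f2 ne unfolding is_wbinom_family_def by blast
      have a: "k + (j + 1) = k + j + 1" "k - 1 + (j + 1) = k + j" "k + j + 1 - k = j + 1" by simp_all
      show ?thesis unfolding D_def a using e1 e2 by (simp add: algebra_simps)
    qed
  qed
  then have "B1 n k = B2 n k" for n k using D_def[of k "n - k"] by simp
  then show ?thesis by blast
qed

fun fQ :: "(int \<Rightarrow> int \<Rightarrow> 'a::field) \<Rightarrow> nat \<Rightarrow> nat \<Rightarrow> 'a" where
  "fQ c 0 b = 1"
| "fQ c (Suc a) 0 = 1"
| "fQ c (Suc a) (Suc b) = fQ c (Suc a) b + fQ c a (Suc b) * c (int (Suc a)) (int b)"

fun gQ :: "(int \<Rightarrow> int \<Rightarrow> 'a::field) \<Rightarrow> nat \<Rightarrow> nat \<Rightarrow> 'a" where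
  "gQ c 0 m = 1"
| "gQ c (Suc a) 0 = 1"
| "gQ c (Suc a) (Suc m) = gQ c (Suc a) m - gQ c a m * c (int (Suc a)) (- int (Suc m))"

fun hQ :: "(int \<Rightarrow> int \<Rightarrow> 'a::field) \<Rightarrow> nat \<Rightarrow> nat \<Rightarrow> 'a" where
  "hQ c 0 b = 1"
| "hQ c (Suc m) 0 = 1"
| "hQ c (Suc m) (Suc b) = (hQ c m (Suc b) - hQ c m b) / c (- int m) (int b)"

lemma fQ0[simp]: "fQ c a 0 = 1" by (cases a) auto
lemma gQ0[simp]: "gQ c a 0 = 1" by (cases a) auto
lemma hQ0[simp]: "hQ c a 0 = 1" by (cases a) auto

definition EQ :: "(int \<Rightarrow> int \<Rightarrow> 'a::field) \<Rightarrow> int \<Rightarrow> int \<Rightarrow> 'a" where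
  "EQ c k j = (if 0 \<le> k \<and> 0 \<le> j then fQ c (nat k) (nat j)
     else if 0 \<le> k then gQ c (nat k) (nat (- j))
     else if 0 \<le> j then hQ c (nat (- k)) (nat j) else 0)"

lemma EQ_f: "EQ c (int a) (int b) = fQ c a b" unfolding EQ_def by simp
lemma EQ_g: "EQ c (int a) (- int m) = gQ c a m" unfolding EQ_def by (cases "m = 0") auto
lemma EQ_h: "EQ c (- int m) (int b) = hQ c m b" unfolding EQ_def by (cases "m = 0") auto
lemma EQ_z: "k < 0 \<Longrightarrow> j < 0 \<Longrightarrow> EQ c k j = 0" unfolding EQ_def by simp
lemma EQ_ax1: "EQ c 0 j = 1" unfolding EQ_def by simp
lemma EQ_ax2: "EQ c k 0 = 1" unfolding EQ_def by simp

lemma EQ_tr: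
  assumes cnz: "\<And>k j. c k j \<noteq> 0" and c1: "\<And>k. c k (-1) = 1" and ne: "(k, j) \<noteq> (0, -1)"
  shows "EQ c k (j + 1) = EQ c k j + EQ c (k - 1) (j + 1) * c k j"
proof -
  consider "k \<ge> 1 \<and> j \<ge> 0" | "k \<ge> 1 \<and> j \<le> -1" | "k \<le> 0 \<and> j \<ge> 0"
    | "k \<le> -1 \<and> j \<le> -2" | "k \<le> -1 \<and> j = -1" | "k = 0 \<and> j \<le> -2"
    using ne by fastforce
  then show ?thesis
  proof cases
    case 1
    define a b where "a = nat (k - 1)" "b = nat j"
    have ab: "k = int (Suc a)" "j = int b" using 1 unfolding a_b_def by auto
    have ab2: "int b + 1 = int (Suc b)" "int (Suc a) - 1 = int a" using ab by simp_all
    have "EQ c k (j + 1) = fQ c (Suc a) (Suc b)" by (simp only: ab ab2 EQ_f)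
    moreover have "EQ c k j = fQ c (Suc a) b" by (simp only: ab ab2 EQ_f)
    moreover have "EQ c (k - 1) (j + 1) = fQ c a (Suc b)" by (simp only: ab ab2 EQ_f)
    ultimately show ?thesis using ab by simp
  next
    case 2
    define a m where "a = nat (k - 1)" "m = nat (- j - 1)"
    have ab: "k = int (Suc a)" "j = - int (Suc m)" using 2 unfolding a_m_def by auto
    have ab2: "- int (Suc m) + 1 = - int m" "int (Suc a) - 1 = int a" using ab by simp_all
    have "EQ c k (j + 1) = gQ c (Suc a) m" by (simp only: ab ab2 EQ_g)
    moreover have "EQ c k j = gQ c (Suc a) (Suc m)" by (simp only: ab ab2 EQ_g)
    moreover have "EQ c (k - 1) (j + 1) = gQ c a m" by (simp only: ab ab2 EQ_g)
    ultimately show ?thesis using ab by simp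
  next
    case 3
    define m b where "m = nat (- k)" "b = nat j"
    have ab: "k = - int m" "j = int b" using 3 unfolding m_b_def by auto
    have ab2: "int b + 1 = int (Suc b)" "- int m - 1 = - int (Suc m)" using ab by simp_all
    have "EQ c k (j + 1) = hQ c m (Suc b)" by (simp only: ab ab2 EQ_h)
    moreover have "EQ c k j = hQ c m b" by (simp only: ab ab2 EQ_h)
    moreover have "EQ c (k - 1) (j + 1) = hQ c (Suc m) (Suc b)" by (simp only: ab ab2 EQ_h)
    ultimately show ?thesis using ab cnz[of k j] by simp
  next
    case 4 then show ?thesis by (simp add: EQ_z)
  next
    case 5 then show ?thesis by (simp add: EQ_z EQ_ax2 c1)
  next
    case 6 then show ?thesis by (simp add: EQ_z EQ_ax1)
  qed
qed

lemma family_exists: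
  assumes nz: "\<And>s t. v s t \<noteq> 0"
  shows "is_wbinom_family v (\<lambda>n k. EQ (\<lambda>k j. Wt v k (j + 1)) k (n - k))"
  unfolding is_wbinom_family_def
proof (intro conjI allI impI)
  fix n :: int
  show "EQ (\<lambda>k j. Wt v k (j + 1)) 0 (n - 0) = 1" by (simp add: EQ_ax1)
  show "EQ (\<lambda>k j. Wt v k (j + 1)) n (n - n) = 1" by (simp add: EQ_ax2)
next
  fix n k :: int
  assume ne: "(n + 1, k) \<noteq> (0, 0)"
  define c where "c = (\<lambda>k j. Wt v k (j + 1))"
  have cnz: "\<And>k j. c k j \<noteq> 0" unfolding c_def using Wt_nz nz by blast
  have c1: "\<And>k. c k (-1) = 1" unfolding c_def by simp
  have ne2: "(k, n - k) \<noteq> (0, -1)" using ne by auto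
  have t: "EQ c k ((n - k) + 1) = EQ c k (n - k) + EQ c (k - 1) ((n - k) + 1) * c k (n - k)"
    using EQ_tr[of c, OF cnz c1 ne2] .
  have e: "n + 1 - k = (n - k) + 1" "n - (k - 1) = (n - k) + 1" by simp_all
  have "c k (n - k) = Wt v k (n + 1 - k)" unfolding c_def e ..
  then show "EQ (\<lambda>k j. Wt v k (j + 1)) k (n + 1 - k) =
        EQ (\<lambda>k j. Wt v k (j + 1)) k (n - k) + EQ (\<lambda>k j. Wt v k (j + 1)) (k - 1) (n - (k - 1)) * Wt v k (n + 1 - k)"
    using t unfolding e c_def by simp
qed

lemma wbinom_spec:
  assumes nz: "\<And>s t. v s t \<noteq> 0"
  shows "is_wbinom_family v (wbinom v)"
proof -
  have ex: "is_wbinom_family v (\<lambda>n k. EQ (\<lambda>k j. Wt v k (j + 1)) k (n - k))"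
    using family_exists[OF nz] .
  show ?thesis unfolding wbinom_def
    by (rule theI[of "is_wbinom_family v", OF ex]) (rule family_unique[OF nz], assumption, rule ex)
qed

lemma wbinom_eq:
  assumes nz: "\<And>s t. v s t \<noteq> 0" and f: "is_wbinom_family v B"
  shows "wbinom v = B"
  using family_unique[OF nz wbinom_spec[OF nz] f] .

theorem theorem5:
  fixes w :: "int \<Rightarrow> int \<Rightarrow> 'a::field" and n k :: int
  assumes "\<And>s t. w s t \<noteq> 0"
  shows "wbinom w n k =
           wbinom (\<lambda>s t. inverse (w t s)) n (n - k) * prodz (\<lambda>j. Wt w j (n - k)) 1 k"
proof -
  note nz = assms
  define w' where "w' = (\<lambda>s t. inverse (w t s))"
  have nz': "\<And>s t. w' s t \<noteq> 0" unfolding w'_def using nz by simp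
  define Bh where "Bh = wbinom w'"
  have fh: "is_wbinom_family w' Bh" unfolding Bh_def using wbinom_spec[OF nz'] .
  define P where "P n k = prodz (\<lambda>j. Wt w j (n - k)) 1 k" for n k
  define C where "C n k = Bh n (n - k) * P n k" for n k
  have "is_wbinom_family w C"
    unfolding is_wbinom_family_def
  proof (intro conjI allI impI)
    fix n :: int
    show "C n 0 = 1" using fh unfolding C_def P_def is_wbinom_family_def by (simp add: prodz_def)
    show "C n n = 1" using fh unfolding C_def P_def is_wbinom_family_def by (simp add: prodz_one)
  next
    fix n k :: int
    assume ne: "(n + 1, k) \<noteq> (0, 0)"
    define Q where "Q = prodz (\<lambda>j. w j (n + 1 - k)) 1 k"
    have Qnz: "Q \<noteq> 0" unfolding Q_def by (rule prodz_nz) (rule nz)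
    have e1: "Bh (n + 1) (n + 1 - k) = Bh n (n + 1 - k) + Bh n (n + 1 - k - 1) * Wt w' (n + 1 - k) (n + 1 - (n + 1 - k))"
      using fh ne unfolding is_wbinom_family_def by auto
    have e2: "Wt w' (n + 1 - k) (n + 1 - (n + 1 - k)) = inverse Q"
      unfolding Q_def Wt_def w'_def by (simp add: prodz_inverse)
    have e3: "P (n + 1) k = P n k * Q"
    proof -
      have "Wt w j (n + 1 - k) = Wt w j (n - k) * w j (n + 1 - k)" for j
        using Wt_step[of w j "n - k", OF nz] by (simp add: algebra_simps)
      then show ?thesis unfolding P_def Q_def by (simp add: prodz_mult)
    qed
    have e4: "P (n + 1) k = P n (k - 1) * Wt w k (n + 1 - k)"
      unfolding P_def using prodz_step[of "\<lambda>j. Wt w j (n + 1 - k)" k 1] Wt_nz[OF nz]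
      by (simp add: algebra_simps)
    have e5: "n + 1 - k - 1 = n - k" "n - (k - 1) = n + 1 - k" by simp_all
    have "C (n + 1) k = (Bh n (n + 1 - k) + Bh n (n - k) * inverse Q) * P (n + 1) k"
      unfolding C_def using e1 e2 e5 by simp
    also have "\<dots> = Bh n (n + 1 - k) * (P n (k - 1) * Wt w k (n + 1 - k)) + Bh n (n - k) * (inverse Q * (P n k * Q))"
      using e3 e4 by (simp add: algebra_simps)
    also have "\<dots> = C n k + C n (k - 1) * Wt w k (n + 1 - k)"
      unfolding C_def e5 using Qnz by (simp add: algebra_simps)
    finally show "C (n + 1) k = C n k + C n (k - 1) * Wt w k (n + 1 - k)" .
  qed
  then have "wbinom w = C" by (rule wbinom_eq[of w C, OF nz])
  then show ?thesis unfolding C_def P_def Bh_def w'_def by simp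
qed

end
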